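(* For each integer $n\ge1$, define the polynomial $$A_n(t)=\sum_{k=0}^{n}\frac{\cos\left(\frac{(n-k)\pi}{2}\right)k^n}{(n-k)!!\,(n+k)!!}\,t^k .$$ Then $A_n(t)=\frac{(-1)^n}{n!}\sum_{k=0}^{\lfloor n/2\rfloor}(-1)^k\binom{n}{k}\left(k-\frac{n}{2}\right)^n t^{n-2k}$, $A_n(0)=0$, $A_n(1)=\tfrac12$, and for $t\neq0$, $$A_n(t)+A_n(1/t)=\frac{(-1)^n}{n!}\sum_{k=0}^{n}(-1)^k\binom{n}{k}\left(k-\frac{n}{2}\right)^n t^{n-2k}.$$ Moreover, for $|t|$ and $|z|$ sufficiently small, $\sum_{n=1}^\infty t^nJ_n(nz)=\sum_{n=1}^\infty A_n(t)z^n$.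
   Context: $m!!$ denotes the double factorial, with $0!!=1$ (and $m!!=m\,(m-2)!!$, $1!!=1$). $J_n$ is the Bessel function of the first kind of order $n$. $\lfloor\cdot\rfloor$ denotes the integer part; $0^0$ is interpreted as $1$ where it occurs (the $k=0$ term in the first sum has $k^n=0$ for $n\ge1$). *)

theory Defs
  imports Complex_Main
begin

fun dfact :: "nat \<Rightarrow> nat" where
  "dfact 0 = 1"
| "dfact (Suc 0) = 1"
| "dfact (Suc (Suc m)) = Suc (Suc m) * dfact m"

definition besselJ :: "nat \<Rightarrow> real \<Rightarrow> real" where
  "besselJ n x = (\<Sum>m. (-1) ^ m / (fact m * fact (m + n)) * (x / 2) ^ (2 * m + n))"

definition A :: "nat \<Rightarrow> real \<Rightarrow> real" where
  "A n t = (\<Sum>k=0..n. cos (real (n - k) * pi / 2) * real k ^ n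
              / (real (dfact (n - k)) * real (dfact (n + k))) * t ^ k)"

end

theory Submission
  imports Defs "HOL-Analysis.Analysis"
begin


lemma pascal_alt:
  fixes f :: "nat \<Rightarrow> real"
  shows "(\<Sum>k\<le>Suc n. (-1)^k * real (Suc n choose k) * f k) =
         (\<Sum>k\<le>n. (-1)^k * real (n choose k) * f k) - (\<Sum>k\<le>n. (-1)^k * real (n choose k) * f (Suc k))"
proof -
  have "(\<Sum>k\<le>Suc n. (-1)^k * real (Suc n choose k) * f k)
     = f 0 + (\<Sum>k\<le>n. (-1)^(Suc k) * real (Suc n choose Suc k) * f (Suc k))"
    by (subst sum.atMost_Suc_shift) simp
  also have "\<dots> = f 0 + (\<Sum>k\<le>n. (-1)^(Suc k) * real (n choose Suc k) * f (Suc k))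
                 - (\<Sum>k\<le>n. (-1)^k * real (n choose k) * f (Suc k))"
    by (simp add: sum.distrib[symmetric] sum_subtractf[symmetric] algebra_simps)
  also have "f 0 + (\<Sum>k\<le>n. (-1)^(Suc k) * real (n choose Suc k) * f (Suc k))
      = (\<Sum>k\<le>Suc n. (-1)^k * real (n choose k) * f k)"
    by (subst sum.atMost_Suc_shift) simp
  also have "\<dots> = (\<Sum>k\<le>n. (-1)^k * real (n choose k) * f k)"
    by simp
  finally show ?thesis .
qed

lemma fin_diff:
  "\<forall>m x. (m < n \<longrightarrow> (\<Sum>k\<le>n. (-1)^k * real (n choose k) * (x + real k)^m) = 0) \<and>
          (m = n \<longrightarrow> (\<Sum>k\<le>n. (-1)^k * real (n choose k) * (x + real k)^m) = (-1)^n * fact n)"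
proof (induction n)
  case 0
  then show ?case by simp
next
  case (Suc n)
  have step: "(\<Sum>k\<le>Suc n. (-1)^k * real (Suc n choose k) * (x + real k)^m)
     = - (\<Sum>i<m. real (m choose i) * (\<Sum>k\<le>n. (-1)^k * real (n choose k) * (x + real k)^i))" for m x
  proof -
    have e: "(x + (1 + real k))^m = (\<Sum>i\<le>m. real (m choose i) * (x + real k)^i)" for k
      using binomial_ring[of "x + real k" 1 m] by (simp add: ac_simps)
    have "(\<Sum>k\<le>Suc n. (-1)^k * real (Suc n choose k) * (x + real k)^m)
       = (\<Sum>k\<le>n. (-1)^k * real (n choose k) * (x + real k)^m) -
         (\<Sum>k\<le>n. (-1)^k * real (n choose k) * (\<Sum>i\<le>m. real (m choose i) * (x + real k)^i))"
      by (subst pascal_alt) (simp add: e)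
    also have "(\<Sum>k\<le>n. (-1)^k * real (n choose k) * (\<Sum>i\<le>m. real (m choose i) * (x + real k)^i))
       = (\<Sum>i\<le>m. real (m choose i) * (\<Sum>k\<le>n. (-1)^k * real (n choose k) * (x + real k)^i))"
      unfolding sum_distrib_left by (subst sum.swap) (simp add: mult_ac)
    also have "\<dots> = (\<Sum>i<m. real (m choose i) * (\<Sum>k\<le>n. (-1)^k * real (n choose k) * (x + real k)^i))
        + (\<Sum>k\<le>n. (-1)^k * real (n choose k) * (x + real k)^m)"
      by (simp add: lessThan_Suc_atMost[symmetric])
    finally show ?thesis by simp
  qed
  show ?case
  proof (intro allI conjI impI)
    fix m x assume "m < Suc n"
    then have "(\<Sum>i<m. real (m choose i) * (\<Sum>k\<le>n. (-1)^k * real (n choose k) * (x + real k)^i)) = 0"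
      using Suc.IH by (intro sum.neutral) auto
    then show "(\<Sum>k\<le>Suc n. (-1)^k * real (Suc n choose k) * (x + real k)^m) = 0"
      unfolding step by simp
  next
    fix m x assume m: "m = Suc n"
    have "(\<Sum>i<Suc n. real (Suc n choose i) * (\<Sum>k\<le>n. (-1)^k * real (n choose k) * (x + real k)^i))
      = (\<Sum>i<n. real (Suc n choose i) * (\<Sum>k\<le>n. (-1)^k * real (n choose k) * (x + real k)^i))
        + real (Suc n choose n) * ((-1)^n * fact n)"
      using Suc.IH by simp
    also have "(\<Sum>i<n. real (Suc n choose i) * (\<Sum>k\<le>n. (-1)^k * real (n choose k) * (x + real k)^i)) = 0"
      using Suc.IH by (intro sum.neutral) auto
    finally show "(\<Sum>k\<le>Suc n. (-1)^k * real (Suc n choose k) * (x + real k)^m) = (-1)^Suc n * fact (Suc n)"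
      using m unfolding step by (simp add: algebra_simps)
  qed
qed



lemma dfact_even: "real (dfact (2*i)) = 2^i * fact i"
proof (induction i)
  case (Suc i)
  have "2 * Suc i = Suc (Suc (2*i))" by simp
  then show ?case using Suc by (simp only: dfact.simps) (simp add: algebra_simps)
qed simp

lemma cos_half_odd: "cos (real (2*i+1) * pi / 2) = 0"
proof -
  have "cos (real (2*i+1) * pi / 2) = cos (real i * pi + pi/2)"
    by (rule arg_cong[where f=cos]) (simp add: field_simps)
  also have "\<dots> = 0" by (simp add: cos_add)
  finally show ?thesis .
qed

lemma cos_half_even: "cos (real (2*i) * pi / 2) = (-1)^i"
proof -
  have "real (2*i) * pi / 2 = real i * pi" by (simp add: field_simps)
  then show ?thesis by simp
qed

lemma alg_aux:
  fixes x1 x2 x3 x4 x5 x6 x7 x8 x9 :: real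
  assumes "x1*x1 = 1" "x2 \<noteq> 0" "x3 \<noteq> 0" "x4 \<noteq> 0" "x5*x6 = x7" "x5 \<noteq> 0" "x6 \<noteq> 0"
  shows "x8 * x9 / (x5*x3*(x6*x4)) * T = x1/x2 * (x8 * (x2/(x3*x4)) * (x1*x9/x7) * T)"
proof -
  have "x1/x2 * (x8 * (x2/(x3*x4)) * (x1*x9/x7) * T) = (x1*x1) * (x2/x2) * (x8 * x9 / (x5*x3*(x6*x4)) * T)"
    using assms by (simp add: field_simps)
  then show ?thesis using assms by simp
qed

lemma A_term:
  assumes "2*j \<le> n"
  shows "cos (real (n - (n - 2*j)) * pi / 2) * real (n - 2*j) ^ n
           / (real (dfact (n - (n - 2*j))) * real (dfact (n + (n - 2*j)))) * t ^ (n - 2*j)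
       = (-1)^n / fact n * ((-1)^j * real (n choose j) * (real j - real n / 2)^n * t^(n - 2*j))"
proof -
  have e1: "n - (n - 2*j) = 2*j" using assms by simp
  have e2: "n + (n - 2*j) = 2*(n-j)" using assms by simp
  have e3: "real (n - 2*j) = real n - 2 * real j" using assms by (simp add: of_nat_diff)
  have e4: "(real j - real n / 2)^n = (-1)^n * (real n - 2 * real j)^n / 2^n"
  proof -
    have "real j - real n / 2 = (-1) * ((real n - 2 * real j) / 2)" by (simp add: field_simps)
    then show ?thesis by (simp only: power_mult_distrib power_divide) simp
  qed
  have e5: "(2::real)^j * 2^(n-j) = 2^n"
    using assms by (simp add: power_add[symmetric])
  have jn: "j \<le> n" using assms by simp
  have e6: "real (n choose j) = fact n / (fact j * fact (n-j))"
    using binomial_fact[OF jn] by simp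
  have "(-1::real)^n * (-1)^n = 1" by (simp add: power_mult_distrib[symmetric])
  then show ?thesis
    unfolding e1 e2 e3 e4 e6 dfact_even cos_half_even
    by (rule alg_aux) (use e5 in auto)
qed

lemma A_formula:
  "A n t = (-1)^n / fact n * (\<Sum>k=0..n div 2. (-1)^k * real (n choose k) * (real k - real n / 2)^n * t^(n - 2*k))"
proof -
  define f where "f k = cos (real (n - k) * pi / 2) * real k ^ n
              / (real (dfact (n - k)) * real (dfact (n + k))) * t ^ k" for k
  have "A n t = sum f {0..n}" unfolding A_def f_def by simp
  also have "\<dots> = sum f {k\<in>{0..n}. even (n-k)}"
  proof (rule sum.mono_neutral_right)
    show "\<forall>i\<in>{0..n} - {k \<in> {0..n}. even (n - k)}. f i = 0"
    proof
      fix i assume "i \<in> {0..n} - {k \<in> {0..n}. even (n - k)}"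
      then have "odd (n - i)" by auto
      then obtain q where q: "n - i = 2*q+1" by (rule oddE)
      show "f i = 0" unfolding f_def q cos_half_odd by simp
    qed
  qed auto
  also have "\<dots> = (\<Sum>j=0..n div 2. f (n - 2*j))"
    apply (rule sum.reindex_bij_witness[where j="\<lambda>k. (n-k) div 2" and i="\<lambda>j. n - 2*j"])
    subgoal by auto
    subgoal by auto
    subgoal by (auto elim!: evenE)
    subgoal by auto
    subgoal by auto
    done
  also have "\<dots> = (\<Sum>j=0..n div 2. (-1)^n / fact n * ((-1)^j * real (n choose j) * (real j - real n / 2)^n * t^(n - 2*j)))"
    unfolding f_def by (intro sum.cong refl A_term) auto
  finally show ?thesis by (simp add: sum_distrib_left)
qed



lemma zero_mid:
  assumes "n \<ge> 1"
  shows "(\<Sum>k=0..n div 2. (-1)^k * real (n choose k) * (real k - real n / 2)^n * h k)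
       = (\<Sum>k\<in>{k. 2*k < n}. (-1)^k * real (n choose k) * (real k - real n / 2)^n * h k)"
proof (rule sum.mono_neutral_right)
  show "\<forall>i\<in>{0..n div 2} - {k. 2 * k < n}. (-1)^i * real (n choose i) * (real i - real n / 2)^n * h i = 0"
  proof
    fix i assume "i \<in> {0..n div 2} - {k. 2 * k < n}"
    then have "2*i = n" by auto
    then have "real i - real n / 2 = 0" by (simp add: field_simps flip: of_nat_mult)
    then show "(-1)^i * real (n choose i) * (real i - real n / 2)^n * h i = 0" using assms by simp
  qed
qed auto

lemma fin_half: "finite {k::nat. 2*k < n}"
  by (rule finite_subset[of _ "{..<n}"]) auto

lemma fin_half2: "finite {k::nat. k \<le> n \<and> n < 2*k}"
  by (rule finite_subset[of _ "{..n}"]) auto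

lemma split_sym:
  fixes G :: "nat \<Rightarrow> real"
  assumes "\<And>k. 2*k = n \<Longrightarrow> G k = 0"
  shows "(\<Sum>k=0..n. G k) = (\<Sum>k\<in>{k. 2*k < n}. G k) + (\<Sum>k\<in>{k. 2*k < n}. G (n - k))"
proof -
  have "(\<Sum>k=0..n. G k) = (\<Sum>k\<in>{0..n} - {k. 2*k = n}. G k)"
    by (rule sum.mono_neutral_right) (use assms in auto)
  also have "{0..n} - {k. 2*k = n} = {k. 2*k < n} \<union> {k. k \<le> n \<and> n < 2*k}" by auto
  also have "(\<Sum>k\<in>{k. 2*k < n} \<union> {k. k \<le> n \<and> n < 2*k}. G k)
      = (\<Sum>k\<in>{k. 2*k < n}. G k) + (\<Sum>k\<in>{k. k \<le> n \<and> n < 2*k}. G k)"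
    by (rule sum.union_disjoint) (auto simp: fin_half fin_half2)
  also have "(\<Sum>k\<in>{k. k \<le> n \<and> n < 2*k}. G k) = (\<Sum>k\<in>{k. 2*k < n}. G (n - k))"
    by (rule sum.reindex_bij_witness[where j="\<lambda>k. n - k" and i="\<lambda>k. n - k"]) auto
  finally show ?thesis .
qed

lemma neg1_diff: "k \<le> n \<Longrightarrow> (-1::real)^(n-k) = (-1)^n * (-1)^k"
proof -
  assume "k \<le> n"
  then have "(-1::real)^n = (-1)^(n-k) * (-1)^k" by (simp add: power_add[symmetric])
  then have "(-1::real)^n * (-1)^k = (-1)^(n-k) * ((-1)^k * (-1)^k)" by simp
  also have "(-1::real)^k * (-1)^k = 1" by (simp add: power_mult_distrib[symmetric])
  finally show ?thesis by simp
qed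

lemma g_sym:
  assumes "k \<le> n"
  shows "(-1)^(n-k) * real (n choose (n-k)) * (real (n-k) - real n / 2)^n
       = (-1)^k * real (n choose k) * (real k - real n / 2)^n"
proof -
  have "real (n-k) - real n / 2 = (-1) * (real k - real n / 2)" using assms by (simp add: of_nat_diff)
  then have "(real (n-k) - real n / 2)^n = (-1)^n * (real k - real n / 2)^n"
    by (simp only: power_mult_distrib)
  moreover have "(-1::real)^n * (-1)^n = 1" by (simp add: power_mult_distrib[symmetric])
  ultimately show ?thesis using assms
    by (simp add: neg1_diff binomial_symmetric[OF assms, symmetric] algebra_simps)
qed

lemma g_mid: "n \<ge> 1 \<Longrightarrow> 2*k = n \<Longrightarrow> (real k - real n / 2)^n = 0"
proof -
  assume "n \<ge> 1" "2*k = n"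
  then have "real k - real n / 2 = 0" by (simp add: field_simps flip: of_nat_mult)
  then show ?thesis using \<open>n \<ge> 1\<close> by simp
qed

lemma A_at_1:
  assumes "n \<ge> 1"
  shows "A n 1 = 1/2"
proof -
  define g where "g k = (-1)^k * real (n choose k) * (real k - real n / 2)^n" for k
  have fd: "(\<Sum>k\<le>n. (-1)^k * real (n choose k) * (- (real n / 2) + real k)^n) = (-1)^n * fact n"
    using fin_diff[of n] by blast
  have "(\<Sum>k=0..n. g k) = (-1)^n * fact n"
    unfolding g_def using fd by (simp add: atLeast0AtMost algebra_simps)
  moreover have "(\<Sum>k=0..n. g k) = (\<Sum>k\<in>{k. 2*k < n}. g k) + (\<Sum>k\<in>{k. 2*k < n}. g (n - k))"
    by (rule split_sym) (use assms g_mid in \<open>simp add: g_def\<close>)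
  moreover have "(\<Sum>k\<in>{k. 2*k < n}. g (n - k)) = (\<Sum>k\<in>{k. 2*k < n}. g k)"
  proof (rule sum.cong)
    fix k assume "k \<in> {k. 2*k < n}"
    then have "k \<le> n" by auto
    then show "g (n - k) = g k" unfolding g_def by (rule g_sym)
  qed simp
  ultimately have h: "(\<Sum>k\<in>{k. 2*k < n}. g k) = (-1)^n * fact n / 2" by simp
  have "A n 1 = (-1)^n / fact n * (\<Sum>k\<in>{k. 2*k < n}. g k)"
    unfolding A_formula zero_mid[OF assms, where h="\<lambda>k. 1 ^ (n - 2*k)"] g_def by simp
  also have "\<dots> = ((-1)^n * (-1)^n) * (fact n / fact n) / 2" unfolding h by simp
  also have "\<dots> = 1/2" by (simp add: power_mult_distrib[symmetric])
  finally show ?thesis .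
qed

lemma A_at_0:
  assumes "n \<ge> 1"
  shows "A n 0 = 0"
  unfolding A_def using assms by (intro sum.neutral) auto

lemma A_recip:
  assumes "n \<ge> 1" "t \<noteq> 0"
  shows "A n t + A n (1 / t) = (-1) ^ n / fact n *
              (\<Sum>k=0..n. (-1) ^ k * real (n choose k) * (real k - real n / 2) ^ n * t powi (int n - 2 * int k))"
proof -
  define g where "g k = (-1)^k * real (n choose k) * (real k - real n / 2)^n" for k
  define G where "G k = g k * t powi (int n - 2 * int k)" for k
  have "(\<Sum>k=0..n. G k) = (\<Sum>k\<in>{k. 2*k < n}. G k) + (\<Sum>k\<in>{k. 2*k < n}. G (n - k))"
    by (rule split_sym) (use assms g_mid in \<open>simp add: G_def g_def\<close>)
  also have "(\<Sum>k\<in>{k. 2*k < n}. G k) = (\<Sum>k\<in>{k. 2*k < n}. g k * t ^ (n - 2*k))"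
  proof (rule sum.cong)
    fix k assume "k \<in> {k. 2*k < n}"
    then have e2: "int n - 2 * int k = int (n - 2*k)" by auto
    show "G k = g k * t ^ (n - 2*k)" unfolding G_def e2 power_int_of_nat ..
  qed simp
  also have "(\<Sum>k\<in>{k. 2*k < n}. G (n - k)) = (\<Sum>k\<in>{k. 2*k < n}. g k * (1/t) ^ (n - 2*k))"
  proof (rule sum.cong)
    fix k assume "k \<in> {k. 2*k < n}"
    then have kn: "k \<le> n" and e: "int n - 2 * int (n - k) = - int (n - 2*k)" by auto
    have "G (n - k) = g k * t powi (- int (n - 2*k))"
      unfolding G_def e using g_sym[OF kn] unfolding g_def by simp
    also have "t powi (- int (n - 2*k)) = (1/t) ^ (n - 2*k)"
      by (simp only: power_int_minus power_int_of_nat power_one_over inverse_eq_divide)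
    finally show "G (n - k) = g k * (1/t) ^ (n - 2*k)" .
  qed simp
  finally have "(\<Sum>k=0..n. G k) = (\<Sum>k\<in>{k. 2*k < n}. g k * t ^ (n - 2*k)) + (\<Sum>k\<in>{k. 2*k < n}. g k * (1/t) ^ (n - 2*k))" .
  moreover have "A n t = (-1)^n / fact n * (\<Sum>k\<in>{k. 2*k < n}. g k * t ^ (n - 2*k))"
    unfolding A_formula zero_mid[OF assms(1)] g_def by simp
  moreover have "A n (1/t) = (-1)^n / fact n * (\<Sum>k\<in>{k. 2*k < n}. g k * (1/t) ^ (n - 2*k))"
    unfolding A_formula zero_mid[OF assms(1)] g_def by simp
  ultimately have "A n t + A n (1/t) = (-1)^n / fact n * (\<Sum>k=0..n. G k)"
    by (simp only: distrib_left)
  then show ?thesis unfolding G_def g_def .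
qed



lemma pow_fact_le_exp: "real N ^ N / fact N \<le> exp (real N)"
proof -
  have s: "(\<lambda>k. real N ^ k /\<^sub>R fact k) sums exp (real N)" by (rule exp_converges)
  have "(\<Sum>k\<in>{N}. real N ^ k /\<^sub>R fact k) \<le> suminf (\<lambda>k. real N ^ k /\<^sub>R fact k)"
    by (rule sum_le_suminf) (use s in \<open>auto simp: sums_iff\<close>)
  then show ?thesis using s by (simp add: sums_iff divide_inverse_commute)
qed

lemma F_bound:
  fixes t z :: real and n m :: nat
  assumes t: "\<bar>t\<bar> \<le> 1"
  shows "\<bar>t^(n+1) * ((-1)^m / (fact m * fact (m + (n+1))) * (real (n+1) * z / 2)^(2*m+(n+1)))\<bar>
         \<le> (exp 1 * \<bar>z\<bar>)^(2*m+(n+1))"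
proof -
  define N where "N = 2*m+(n+1)"
  have mN: "m \<le> N" and e1: "m + (n+1) = N - m" unfolding N_def by auto
  have fN: "fact N \<le> fact m * fact (m + (n+1)) * (2::real)^N"
  proof -
    have "fact m * fact (N - m) * (N choose m) = fact N" by (rule binomial_fact_lemma[OF mN])
    then have "(fact N :: real) = fact m * fact (N-m) * real (N choose m)"
      by (metis of_nat_fact of_nat_mult)
    also have "\<dots> \<le> fact m * fact (N-m) * 2^N"
    proof (intro mult_left_mono)
      have "real (N choose m) \<le> real (2^N)" using binomial_le_pow2[of N m] by (simp only: of_nat_le_iff)
      then show "real (N choose m) \<le> 2^N" by simp
    qed simp
    finally show ?thesis unfolding e1 .
  qed
  have pos: "(0::real) < fact m * fact (m + (n+1))" by simp
  have a1: "\<bar>t\<bar>^(n+1) \<le> 1" by (rule power_le_one) (use t in auto)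
  have a2: "1 / (fact m * fact (m + (n+1))) \<le> (2::real)^N / fact N"
    using fN pos by (simp add: field_simps)
  have a3: "(real (n+1) * \<bar>z\<bar> / 2)^N \<le> (real N * \<bar>z\<bar> / 2)^N"
    by (intro power_mono) (auto simp: N_def intro!: mult_right_mono)
  have "\<bar>t^(n+1) * ((-1)^m / (fact m * fact (m + (n+1))) * (real (n+1) * z / 2)^N)\<bar>
      = \<bar>t\<bar>^(n+1) * ((1 / (fact m * fact (m + (n+1)))) * (real (n+1) * \<bar>z\<bar> / 2)^N)"
    by (simp add: abs_mult power_abs abs_divide)
  also have "\<dots> \<le> 1 * ((2^N / fact N) * (real N * \<bar>z\<bar> / 2)^N)"
    by (intro mult_mono a1 a2 a3) auto
  also have "\<dots> = (real N ^ N / fact N) * \<bar>z\<bar>^N"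
    by (simp add: power_mult_distrib power_divide)
  also have "\<dots> \<le> exp (real N) * \<bar>z\<bar>^N"
    by (intro mult_right_mono pow_fact_le_exp) auto
  also have "\<dots> = (exp 1 * \<bar>z\<bar>)^N"
    by (simp add: power_mult_distrib exp_of_nat_mult[symmetric])
  finally show ?thesis unfolding N_def .
qed

lemma K_term:
  fixes t z :: real
  assumes "2*m < N"
  shows "(-1)^m / (fact m * fact (N - m)) * ((real N - 2 * real m) * z / 2)^N * t^(N-2*m)
       = (-1)^N / fact N * ((-1)^m * real (N choose m) * (real m - real N / 2)^N * t^(N-2*m)) * z^N"
proof -
  have e4: "(real m - real N / 2)^N = (-1)^N * (real N - 2 * real m)^N / 2^N"
  proof -
    have "real m - real N / 2 = (-1) * ((real N - 2 * real m) / 2)" by (simp add: field_simps)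
    then show ?thesis by (simp only: power_mult_distrib power_divide) simp
  qed
  have jn: "m \<le> N" using assms by simp
  have e6: "real (N choose m) = fact N / (fact m * fact (N-m))"
    using binomial_fact[OF jn] by simp
  have s: "(-1::real)^N * (-1)^N = 1" by (simp add: power_mult_distrib[symmetric])
  have "(-1)^N / fact N * ((-1)^m * (fact N / (fact m * fact (N-m))) * ((-1)^N * (real N - 2 * real m)^N / 2^N) * t^(N-2*m)) * z^N
     = ((-1)^N * (-1)^N) * (fact N / fact N) * ((-1)^m / (fact m * fact (N - m)) * ((real N - 2 * real m)^N * z^N / 2^N) * t^(N-2*m))"
    by (simp add: field_simps)
  also have "\<dots> = (-1)^m / (fact m * fact (N - m)) * ((real N - 2 * real m) * z / 2)^N * t^(N-2*m)"
    unfolding s by (simp add: power_mult_distrib power_divide)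
  finally show ?thesis unfolding e4 e6 by simp
qed

lemma kapteyn:
  "\<exists>\<epsilon>>0. \<forall>t z :: real. \<bar>t\<bar> < \<epsilon> \<and> \<bar>z\<bar> < \<epsilon> \<longrightarrow>
            (\<exists>S. (\<lambda>m. t ^ (m + 1) * besselJ (m + 1) (real (m + 1) * z)) sums S
               \<and> (\<lambda>m. A (m + 1) t * z ^ (m + 1)) sums S)"
proof (rule exI[of _ "1/4"], intro conjI allI impI)
  fix t z :: real
  assume tz: "\<bar>t\<bar> < 1/4 \<and> \<bar>z\<bar> < 1/4"
  define q where "q = exp 1 * \<bar>z\<bar>"
  have q0: "0 \<le> q" unfolding q_def by simp
  have q1: "q < 1"
  proof -
    have "q \<le> 3 * \<bar>z\<bar>" unfolding q_def by (intro mult_right_mono exp_le) auto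
    then show ?thesis using tz by simp
  qed
  have qq: "q^2 < 1" using q0 q1 abs_square_less_1[of q] by simp
  have t1: "\<bar>t\<bar> \<le> 1" using tz by simp
  define F where "F = (\<lambda>(n::nat, m::nat). t^(n+1) * ((-1)^m / (fact m * fact (m + (n+1))) * (real (n+1) * z / 2)^(2*m+(n+1))))"
  define B where "B = (\<lambda>(n::nat, m::nat). q^(2*m+(n+1)))"
  have Bn: "B x \<ge> 0" for x unfolding B_def using q0 by (auto split: prod.splits)
  have geo: "(\<lambda>m. q^(2*m+(n+1))) sums (q^(n+1) * (1 / (1 - q^2)))" for n
  proof -
    have "(\<lambda>m. (q^2)^m) sums (1 / (1 - q^2))"
      by (rule geometric_sums) (use q0 q1 in \<open>simp add: abs_square_less_1\<close>)
    from sums_mult[OF this, of "q^(n+1)"] have s: "(\<lambda>m. q^(n+1) * (q^2)^m) sums (q^(n+1) * (1 / (1 - q^2)))" .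
    have pe: "q^(2*m+(n+1)) = q^(n+1) * (q^2)^m" for m
      by (simp add: power_add mult_ac flip: power_mult)
    show ?thesis unfolding pe by (rule s)
  qed
  have Bsum: "B summable_on UNIV"
  proof -
    have "B summable_on Sigma UNIV (\<lambda>_. UNIV)"
    proof (rule summable_on_SigmaI)
      show "((\<lambda>m. B (n, m)) has_sum (q^(n+1) * (1 / (1 - q^2)))) UNIV" for n
        unfolding B_def prod.case by (rule sums_nonneg_imp_has_sum[OF geo]) (use q0 in simp)
      have "summable (\<lambda>n. q^(n+1) * (1 / (1 - q^2)))"
        by (intro summable_mult2) (use summable_geometric[of q] q0 q1 in \<open>simp add: summable_mult\<close>)
      then show "(\<lambda>n. q^(n+1) * (1 / (1 - q^2))) summable_on UNIV"
        by (rule summable_nonneg_imp_summable_on) (use q0 qq in \<open>auto intro!: divide_nonneg_nonneg\<close>)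
    qed (use Bn in auto)
    then show ?thesis by simp
  qed
  have Fsum: "F summable_on UNIV"
  proof -
    have "(\<lambda>x. norm (B x)) summable_on UNIV" using Bsum summable_on_iff_abs_summable_on_real by blast
    then have "(\<lambda>x. norm (F x)) summable_on UNIV"
    proof (rule Infinite_Sum.abs_summable_on_comparison_test)
      fix x :: "nat \<times> nat"
      obtain n m where x: "x = (n, m)" by (cases x)
      show "norm (F x) \<le> norm (B x)"
        unfolding x F_def B_def q_def using F_bound[OF t1, of n m z] by simp
    qed
    then show ?thesis using summable_on_iff_abs_summable_on_real by blast
  qed
  define S where "S = infsum F UNIV"
  have FS: "(F has_sum S) (Sigma UNIV (\<lambda>_. UNIV))"
    unfolding S_def using Fsum by simp
  have inner: "((\<lambda>m. F (n, m)) has_sum (t^(n+1) * besselJ (n+1) (real (n+1) * z))) UNIV" for n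
  proof -
    define bt where "bt m = (-1)^m / (fact m * fact (m + (n+1))) * (real (n+1) * z / 2)^(2*m+(n+1))" for m
    have "summable (\<lambda>m. norm (bt m))"
    proof (rule summable_comparison_test')
      show "summable (\<lambda>m. q^(2*m+(n+1)))" using geo[of n] by (rule sums_summable)
      fix m
      show "norm (norm (bt m)) \<le> q^(2*m+(n+1))"
        using F_bound[of 1 n m z] unfolding bt_def q_def by simp
    qed
    moreover have "bt sums (besselJ (n+1) (real (n+1) * z))"
      unfolding besselJ_def bt_def
      by (rule summable_sums, rule summable_norm_cancel) (use calculation in \<open>simp add: bt_def\<close>)
    ultimately have "(bt has_sum besselJ (n+1) (real (n+1) * z)) UNIV"
      by (rule norm_summable_imp_has_sum)
    from has_sum_cmult_right[OF this, of "t^(n+1)"] show ?thesis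
      unfolding bt_def F_def by simp
  qed
  have L: "(\<lambda>n. t^(n+1) * besselJ (n+1) (real (n+1) * z)) sums S"
    by (rule has_sum_imp_sums, rule has_sum_SigmaD[where f=F and A=UNIV and B="\<lambda>_. UNIV"]) (use FS inner in auto)
  define T where "T = Sigma (UNIV :: nat set) (\<lambda>M. {m::nat. 2*m \<le> M})"
  define h where "h = (\<lambda>(M::nat, m::nat). F (M - 2*m, m))"
  have hT: "(h has_sum S) T"
  proof -
    have "(F has_sum S) UNIV" using FS by simp
    moreover have "(F has_sum S) UNIV = (h has_sum S) T"
      by (rule has_sum_reindex_bij_witness[where j="\<lambda>(n,m). (n+2*m, m)" and i="\<lambda>(M,m). (M-2*m, m)"])
         (auto simp: T_def h_def)
    ultimately show ?thesis by simp
  qed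
  have fin: "finite {m::nat. 2*m \<le> M}" for M
    by (rule finite_subset[of _ "{..M}"]) auto
  have R0: "(\<lambda>M. \<Sum>m\<in>{m. 2*m \<le> M}. h (M, m)) sums S"
    by (rule has_sum_imp_sums, rule has_sum_SigmaD[OF hT[unfolded T_def]]) (use fin in simp)
  have grp: "(\<Sum>m\<in>{m. 2*m \<le> M}. h (M, m)) = A (M+1) t * z^(M+1)" for M
  proof -
    have set: "{k. 2*k < M+1} = {m. 2*m \<le> M}" by auto
    have "A (M+1) t * z^(M+1) = (\<Sum>k\<in>{m. 2*m \<le> M}. (-1)^(M+1) / fact (M+1) * ((-1)^k * real ((M+1) choose k) * (real k - real (M+1) / 2)^(M+1) * t^((M+1) - 2*k)) * z^(M+1))"
      unfolding A_formula zero_mid[of "M+1", OF le_add2] set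
      by (simp add: sum_distrib_left sum_distrib_right)
    also have "\<dots> = (\<Sum>m\<in>{m. 2*m \<le> M}. h (M, m))"
    proof (rule sum.cong[OF refl])
      fix m assume "m \<in> {m. 2*m \<le> M}"
      then have m: "2*m < M+1" by simp
      have e1: "M - 2*m + 1 = (M+1) - 2*m" "m + (M - 2*m + 1) = (M+1) - m" "2*m + (M - 2*m + 1) = M+1"
        using m by auto
      have e3: "m + ((M+1) - 2*m) = (M+1) - m" "2*m + ((M+1) - 2*m) = M+1"
        using m by auto
      have e2: "real ((M+1) - 2*m) = real (M+1) - 2 * real m" using m by (simp add: of_nat_diff)
      show "(-1)^(M+1) / fact (M+1) * ((-1)^m * real ((M+1) choose m) * (real m - real (M+1) / 2)^(M+1) * t^((M+1) - 2*m)) * z^(M+1) = h (M, m)"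
        unfolding h_def F_def prod.case e1 e3 e2 K_term[OF m, of z t, symmetric] by (rule mult.commute)
    qed
    finally show ?thesis by simp
  qed
  have R: "(\<lambda>M. A (M+1) t * z^(M+1)) sums S" using R0 unfolding grp .
  show "\<exists>S. (\<lambda>m. t ^ (m + 1) * besselJ (m + 1) (real (m + 1) * z)) sums S
               \<and> (\<lambda>m. A (m + 1) t * z ^ (m + 1)) sums S"
    using L R by blast
qed simp


theorem mainTheorem2:
  shows "(\<forall>n\<ge>1. \<forall>t::real.
            A n t = (-1) ^ n / fact n *
              (\<Sum>k=0..n div 2. (-1) ^ k * real (n choose k) * (real k - real n / 2) ^ n * t ^ (n - 2 * k)))
       \<and> (\<forall>n\<ge>1. A n 0 = 0 \<and> A n 1 = 1 / 2)
       \<and> (\<forall>n\<ge>1. \<forall>t::real. t \<noteq> 0 \<longrightarrow>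
            A n t + A n (1 / t) = (-1) ^ n / fact n *
              (\<Sum>k=0..n. (-1) ^ k * real (n choose k) * (real k - real n / 2) ^ n * t powi (int n - 2 * int k)))
       \<and> (\<exists>\<epsilon>>0. \<forall>t z :: real. \<bar>t\<bar> < \<epsilon> \<and> \<bar>z\<bar> < \<epsilon> \<longrightarrow>
            (\<exists>S. (\<lambda>m. t ^ (m + 1) * besselJ (m + 1) (real (m + 1) * z)) sums S
               \<and> (\<lambda>m. A (m + 1) t * z ^ (m + 1)) sums S))"
  using A_formula A_at_0 A_at_1 A_recip kapteyn by blast

end
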